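(* Let $\mathcal B$ be finite, $r,\tilde r:\mathcal B\to\mathbb R$, $\nu\in\Delta(\mathcal B)$ with $\nu(b)>0$ for all $b$, and $\varepsilon\ge0$. Suppose $\inf_{\xi\in\mathbb R}\langle\nu,|r-\tilde r-\xi\mathbf 1|\rangle_{\mathcal B}\le\varepsilon$ and $\langle x,r-\tilde r\rangle_{\mathcal B}=0$ for some $x:\mathcal B\to\mathbb R$ with $\langle\mathbf 1,x\rangle_{\mathcal B}\ne0$. Then $$\langle\nu,|r-\tilde r|\rangle_{\mathcal B}\le\Bigl(1+\Bigl\|\frac x\nu\Bigr\|_\infty\cdot\frac1{|\langle x,\mathbf 1\rangle_{\mathcal B}|}\Bigr)\varepsilon.$$
   Context: $\langle f,g\rangle_{\mathcal B}=\sum_bf(b)g(b)$; $x/\nu$ is the entrywise ratio; $\mathbf 1$ is the all-ones function. *)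

theory Defs
  imports "HOL-Analysis.Analysis"
begin

end

theory Submission
  imports Defs
begin

theorem mainTheorem14:
  fixes B :: "'b set" and r rt \<nu> x :: "'b \<Rightarrow> real" and \<epsilon> :: real
  assumes "finite B"
    and "\<forall>b\<in>B. \<nu> b > 0" and "(\<Sum>b\<in>B. \<nu> b) = 1"
    and "\<epsilon> \<ge> 0"
    and "(INF \<xi>::real. (\<Sum>b\<in>B. \<nu> b * \<bar>r b - rt b - \<xi>\<bar>)) \<le> \<epsilon>"
    and "(\<Sum>b\<in>B. x b * (r b - rt b)) = 0"
    and "(\<Sum>b\<in>B. x b) \<noteq> 0"
  shows "(\<Sum>b\<in>B. \<nu> b * \<bar>r b - rt b\<bar>)
     \<le> (1 + (MAX b\<in>B. \<bar>x b / \<nu> b\<bar>) * (1 / \<bar>\<Sum>b\<in>B. x b\<bar>)) * \<epsilon>"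
proof -
  define d where "d b = r b - rt b" for b
  define S where "S = (\<Sum>b\<in>B. x b)"
  define M where "M = (MAX b\<in>B. \<bar>x b / \<nu> b\<bar>)"
  define f where "f \<xi> = (\<Sum>b\<in>B. \<nu> b * \<bar>d b - \<xi>\<bar>)" for \<xi>
  define L where "L = (\<Sum>b\<in>B. \<nu> b * \<bar>d b\<bar>)"
  have Bne: "B \<noteq> {}" using assms(7) by auto
  have Spos: "\<bar>S\<bar> > 0" using assms(7) S_def by auto
  have Mge: "\<bar>x b / \<nu> b\<bar> \<le> M" if "b \<in> B" for b
    unfolding M_def using assms(1) that by (intro Max_ge) auto
  have M0: "M \<ge> 0" using Mge Bne by (meson abs_ge_zero all_not_in_conv order_trans)
  define C where "C = 1 + M * (1 / \<bar>S\<bar>)"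
  have Cpos: "C \<ge> 1" unfolding C_def using M0 Spos by simp
  have f0: "f \<xi> \<ge> 0" for \<xi> unfolding f_def using assms(2) by (intro sum_nonneg) auto
  have key: "L \<le> C * f \<xi>" for \<xi>
  proof -
    have "L \<le> (\<Sum>b\<in>B. \<nu> b * \<bar>d b - \<xi>\<bar> + \<nu> b * \<bar>\<xi>\<bar>)"
      unfolding L_def
    proof (intro sum_mono)
      fix b assume "b \<in> B"
      hence "\<nu> b > 0" using assms(2) by auto
      moreover have "\<bar>d b\<bar> \<le> \<bar>d b - \<xi>\<bar> + \<bar>\<xi>\<bar>" by linarith
      ultimately show "\<nu> b * \<bar>d b\<bar> \<le> \<nu> b * \<bar>d b - \<xi>\<bar> + \<nu> b * \<bar>\<xi>\<bar>"
        by (metis distrib_left less_imp_le mult_left_mono)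
    qed
    also have "\<dots> = f \<xi> + \<bar>\<xi>\<bar>"
      unfolding f_def sum.distrib sum_distrib_right[symmetric] using assms(3) by simp
    finally have L1: "L \<le> f \<xi> + \<bar>\<xi>\<bar>" .
    have "\<xi> * S = (\<Sum>b\<in>B. x b * (\<xi> - d b))"
    proof -
      have "(\<Sum>b\<in>B. x b * (\<xi> - d b)) = (\<Sum>b\<in>B. \<xi> * x b - x b * d b)"
        by (rule sum.cong) (auto simp: algebra_simps)
      also have "\<dots> = \<xi> * S - (\<Sum>b\<in>B. x b * d b)"
        by (simp add: sum_subtractf sum_distrib_left S_def)
      also have "(\<Sum>b\<in>B. x b * d b) = 0" using assms(6) by (simp add: d_def)
      finally show ?thesis by simp
    qed
    hence "\<bar>\<xi>\<bar> * \<bar>S\<bar> = \<bar>\<Sum>b\<in>B. x b * (\<xi> - d b)\<bar>"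
      by (metis abs_mult)
    also have "\<dots> \<le> (\<Sum>b\<in>B. \<bar>x b * (\<xi> - d b)\<bar>)"
      by (rule sum_abs)
    also have "\<dots> \<le> (\<Sum>b\<in>B. M * (\<nu> b * \<bar>d b - \<xi>\<bar>))"
    proof (intro sum_mono)
      fix b assume b: "b \<in> B"
      hence nb: "\<nu> b > 0" using assms(2) by auto
      have "\<bar>x b\<bar> = \<bar>x b / \<nu> b\<bar> * \<nu> b" using nb by (simp add: abs_divide abs_of_pos)
      also have "\<dots> \<le> M * \<nu> b" using Mge[OF b] nb by (intro mult_right_mono) auto
      finally have "\<bar>x b\<bar> \<le> M * \<nu> b" .
      hence "\<bar>x b\<bar> * \<bar>d b - \<xi>\<bar> \<le> M * \<nu> b * \<bar>d b - \<xi>\<bar>"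
        by (simp add: mult_right_mono)
      thus "\<bar>x b * (\<xi> - d b)\<bar> \<le> M * (\<nu> b * \<bar>d b - \<xi>\<bar>)"
        by (simp add: abs_mult abs_minus_commute mult.assoc)
    qed
    also have "\<dots> = M * f \<xi>" unfolding f_def by (simp add: sum_distrib_left)
    finally have "\<bar>\<xi>\<bar> \<le> M * f \<xi> / \<bar>S\<bar>" using Spos by (simp add: pos_le_divide_eq)
    with L1 show ?thesis unfolding C_def by (simp add: algebra_simps)
  qed
  have "L / C \<le> (INF \<xi>::real. f \<xi>)"
    by (rule cINF_greatest) (use key Cpos in \<open>auto simp: pos_divide_le_eq mult.commute\<close>)
  also have "\<dots> \<le> \<epsilon>" using assms(5) unfolding f_def d_def .
  finally have "L \<le> C * \<epsilon>" using Cpos by (simp add: pos_divide_le_eq mult.commute)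
  thus ?thesis unfolding L_def C_def M_def S_def d_def .
qed

end
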